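(* Let $(Q,\Sigma,\Psi)$ be a HMM. For any $\pi_1,\pi_2\in\mathbb{R}^{|Q|}$ we have $\pi_1\equiv\pi_2$ if and only if $\pi_1-\pi_2$ is orthogonal to $\mathrm{Span}\{\Psi(w)\mathbbm{1}^T\mid w\in\Sigma^*\}$.
   Context: Let $(\Sigma,\mathscr{G},\lambda)$ be a measure space where $\Sigma$ is a topological space and every open subset of $\Sigma$ belongs to $\mathscr{G}$ and has positive measure. A HMM is a triple $(Q,\Sigma,\Psi)$ with $Q$ a finite set and $\Psi:\Sigma\to[0,\infty)^{|Q|\times|Q|}$ a piecewise continuous measurable function such that the entrywise integral $\int_\Sigma\Psi\,d\lambda$ is stochastic. $\Psi$ is piecewise continuous if there is an open $C\subseteq\Sigma$ on which $\Psi$ is continuous such that each $x\in\Sigma\setminus C$ is the limit of some sequence $x_n\in C$ with $\Psi(x_n)\to\Psi(x)$. $\Psi$ is extended to finite words by $\Psi(x_1\cdots x_n)=\Psi(x_1)\cdots\Psi(x_n)$ (the empty word giving the identity), $\Sigma^*$ is the set of finite words, $\mathbbm{1}=(1,\dots,1)$, and $\lambda^n$ is the product measure on $\Sigma^n$ with product $\sigma$-algebra $\mathscr{G}^n$. For a row vector $\pi$, $\mathbb{P}_\pi$ is the (for initial distributions: unique probability) measure on $\Sigma^\omega$ determined by $\mathbb{P}_\pi(A\Sigma^\omega)=\pi\left(\int_A\Psi\,d\lambda^n\right)\mathbbm{1}^T$ for cylinder sets $A=A_1\times\dots\times A_n$, $A_i\in\mathscr{G}$, where $A\Sigma^\omega$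 is the set of infinite words whose first $n$ letters lie in $A$. $\pi_1\equiv\pi_2$ means $\mathbb{P}_{\pi_1}(A)=\mathbb{P}_{\pi_2}(A)$ for all measurable $A\subseteq\Sigma^\omega$ (equivalently, $\pi_1\int_E\Psi\,d\lambda^n\mathbbm{1}^T=\pi_2\int_E\Psi\,d\lambda^n\mathbbm{1}^T$ for all $n$ and all $E\in\mathscr{G}^n$). *)

theory Defs
  imports "HOL-Analysis.Analysis" "HOL-Probability.Probability"
begin

fun psi_word :: "('a \<Rightarrow> real^'q^'q) \<Rightarrow> 'a list \<Rightarrow> real^'q^'q" where
  "psi_word \<Psi> [] = mat 1"
| "psi_word \<Psi> (x # xs) = \<Psi> x ** psi_word \<Psi> xs"

definition ones :: "real^'q" where "ones = (\<chi> i. 1)"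

definition piecewise_continuous :: "('a::topological_space \<Rightarrow> 'b::topological_space) \<Rightarrow> bool" where
  "piecewise_continuous \<Psi> \<longleftrightarrow>
     (\<exists>C. open C \<and> continuous_on C \<Psi> \<and>
        (\<forall>x. x \<notin> C \<longrightarrow> (\<exists>s::nat \<Rightarrow> 'a. (\<forall>n. s n \<in> C) \<and> s \<longlonglongrightarrow> x \<and> (\<lambda>n. \<Psi> (s n)) \<longlonglongrightarrow> \<Psi> x)))"

definition admissible_space :: "'a::topological_space measure \<Rightarrow> bool" where
  "admissible_space M \<longleftrightarrow> space M = UNIV \<and>
     (\<forall>U. open U \<longrightarrow> U \<in> sets M \<and> (U \<noteq> {} \<longrightarrow> emeasure M U > 0))"

definition mat_integral :: "'b measure \<Rightarrow> ('b \<Rightarrow> real^'q^'q) \<Rightarrow> real^'q^'q" where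
  "mat_integral M F = (\<chi> i j. integral\<^sup>L M (\<lambda>x. F x $ i $ j))"

definition is_HMM :: "'a::topological_space measure \<Rightarrow> ('a \<Rightarrow> real^'q::finite^'q) \<Rightarrow> bool" where
  "is_HMM M \<Psi> \<longleftrightarrow> admissible_space M \<and>
     \<Psi> \<in> borel_measurable M \<and>
     (\<forall>x i j. 0 \<le> \<Psi> x $ i $ j) \<and>
     piecewise_continuous \<Psi> \<and>
     (\<forall>i j. integrable M (\<lambda>x. \<Psi> x $ i $ j)) \<and>
     (\<forall>i. (\<Sum>j\<in>UNIV. mat_integral M \<Psi> $ i $ j) = 1)"

text \<open>n-fold product measure \<lambda>^n on \<Sigma>^n (words as functions on {..<n}).\<close>
abbreviation prod_meas :: "'a measure \<Rightarrow> nat \<Rightarrow> (nat \<Rightarrow> 'a) measure" where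
  "prod_meas M n \<equiv> PiM {..<n} (\<lambda>_. M)"

definition word_integral :: "'a measure \<Rightarrow> ('a \<Rightarrow> real^'q^'q) \<Rightarrow> nat \<Rightarrow> (nat \<Rightarrow> 'a) set \<Rightarrow> real^'q^'q" where
  "word_integral M \<Psi> n E =
     (\<chi> i j. set_lebesgue_integral (prod_meas M n) E (\<lambda>w. psi_word \<Psi> (map w [0..<n]) $ i $ j))"

definition hmm_equiv :: "'a measure \<Rightarrow> ('a \<Rightarrow> real^'q^'q) \<Rightarrow> real^'q \<Rightarrow> real^'q \<Rightarrow> bool" where
  "hmm_equiv M \<Psi> \<pi>1 \<pi>2 \<longleftrightarrow>
     (\<forall>n. \<forall>E \<in> sets (prod_meas M n).
        (\<pi>1 v* word_integral M \<Psi> n E) \<bullet> ones = (\<pi>2 v* word_integral M \<Psi> n E) \<bullet> ones)"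

end

theory Submission
  imports Defs
begin

lemma rect_additive:
  fixes M :: "'a measure" and A :: "nat \<Rightarrow> nat \<Rightarrow> 'a set" and B :: "nat \<Rightarrow> 'a set"
    and c :: "nat \<Rightarrow> ennreal" and d :: ennreal
  assumes A: "\<And>k i. A k i \<in> sets M" and B: "\<And>i. B i \<in> sets M"
  and eq: "\<And>x::nat\<Rightarrow>'a. (\<Sum>k. c k * (\<Prod>i<n. indicator (A k i) (x i))) = d * (\<Prod>i<n. indicator (B i) (x i))"
  shows "(\<Sum>k. c k * (\<Prod>i<n. emeasure M (A k i))) = d * (\<Prod>i<n. emeasure M (B i))"
  using eq
proof (induction n arbitrary: c d)
  case 0
  then show ?case by simp
next
  case (Suc n)
  have step: "(\<Sum>k. c k * indicator (A k n) t * (\<Prod>i<n. emeasure M (A k i)))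
      = d * indicator (B n) t * (\<Prod>i<n. emeasure M (B i))" for t
  proof (rule Suc.IH)
    fix x :: "nat \<Rightarrow> 'a"
    have h: "(\<Prod>i<n. indicator (E i) ((x(n:=t)) i)) = (\<Prod>i<n. indicator (E i) (x i) :: ennreal)" for E :: "nat \<Rightarrow> 'a set"
      by (rule prod.cong) auto
    from Suc.prems[of "x(n:=t)"]
    show "(\<Sum>k. c k * indicator (A k n) t * (\<Prod>i<n. indicator (A k i) (x i))) =
          d * indicator (B n) t * (\<Prod>i<n. indicator (B i) (x i))"
      by (simp add: h ac_simps)
  qed
  have "(\<Sum>k. c k * (\<Prod>i<Suc n. emeasure M (A k i))) = (\<Sum>k. \<integral>\<^sup>+ t. (c k * (\<Prod>i<n. emeasure M (A k i))) * indicator (A k n) t \<partial>M)"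
    by (simp only: nn_integral_cmult_indicator[OF A]) (simp add: ac_simps)
  also have "\<dots> = \<integral>\<^sup>+ t. (\<Sum>k. (c k * (\<Prod>i<n. emeasure M (A k i))) * indicator (A k n) t) \<partial>M"
    using A by (intro nn_integral_suminf[symmetric]) auto
  also have "\<dots> = \<integral>\<^sup>+ t. (d * (\<Prod>i<n. emeasure M (B i))) * indicator (B n) t \<partial>M"
    using step by (simp add: ac_simps)
  also have "\<dots> = d * (\<Prod>i<Suc n. emeasure M (B i))"
    by (simp only: nn_integral_cmult_indicator[OF B]) (simp add: ac_simps)
  finally show ?case .
qed

definition rects :: "'a measure \<Rightarrow> nat \<Rightarrow> (nat \<Rightarrow> 'a) set set" where
  "rects M n = {PiE {..<n} A | A. \<forall>i<n. A i \<in> sets M}"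

lemma rects_semiring:
  assumes sp: "space M = UNIV" and n: "0 < n"
  shows "semiring_of_sets (PiE {..<n} (\<lambda>_. UNIV)) (rects M n)"
proof
  show "rects M n \<subseteq> Pow (PiE {..<n} (\<lambda>_. UNIV))"
    by (auto simp: rects_def PiE_def)
  have "PiE {..<n} (\<lambda>_. {}) = ({} :: (nat \<Rightarrow> 'a) set)"
    using n by (auto simp: PiE_eq_empty_iff)
  then show "{} \<in> rects M n"
    unfolding rects_def by (intro CollectI exI[of _ "\<lambda>_. {}"]) auto
  fix a b assume a: "a \<in> rects M n" and b: "b \<in> rects M n"
  then obtain A B where aA: "a = PiE {..<n} A" "\<forall>i<n. A i \<in> sets M"
    and bB: "b = PiE {..<n} B" "\<forall>i<n. B i \<in> sets M" by (auto simp: rects_def)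
  show "a \<inter> b \<in> rects M n"
    using aA bB unfolding rects_def by (auto simp: PiE_Int intro!: exI[of _ "\<lambda>i. A i \<inter> B i"])
  define D where "D j = PiE {..<n} (\<lambda>i. if i < j then A i \<inter> B i else if i = j then A i - B i else A i)" for j
  show "\<exists>C\<subseteq>rects M n. finite C \<and> disjoint C \<and> a - b = \<Union>C"
  proof (intro exI conjI)
    show "D ` {..<n} \<subseteq> rects M n"
    proof clarify
      fix j assume "j < (n::nat)"
      show "D j \<in> rects M n"
        unfolding rects_def D_def
        by (rule CollectI, rule exI[of _ "\<lambda>i. if i < j then A i \<inter> B i else if i = j then A i - B i else A i"])
           (use aA bB in auto)
    qed
    show "finite (D ` {..<n})" by simp
    show "disjoint (D ` {..<n})"
    proof (rule disjointI, clarify)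
      fix j j' assume ne: "D j \<noteq> D j'" and j: "j < n" and j': "j' < n"
      then have "j \<noteq> j'" by auto
      then consider "j < j'" | "j' < j" by linarith
      then show "D j \<inter> D j' = {}"
      proof cases
        case 1
        { fix x assume "x \<in> D j" "x \<in> D j'"
          then have False using 1 j j' unfolding D_def PiE_iff
            by (metis (full_types) DiffD2 IntD2 lessThan_iff less_irrefl) }
        then show ?thesis by blast
      next
        case 2
        { fix x assume "x \<in> D j" "x \<in> D j'"
          then have False using 2 j j' unfolding D_def PiE_iff
            by (metis (full_types) DiffD2 IntD2 lessThan_iff less_irrefl) }
        then show ?thesis by blast
      qed
    qed
    show "a - b = \<Union> (D ` {..<n})"
    proof
      show "\<Union> (D ` {..<n}) \<subseteq> a - b"
      proof clarify
        fix j x assume j: "j < n" and x: "x \<in> D j"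
        have "x \<in> a" using x unfolding aA D_def PiE_iff by (metis IntD1 DiffD1)
        moreover have "x \<notin> b" using x j unfolding bB D_def PiE_iff by (metis DiffD2 lessThan_iff less_irrefl)
        ultimately show "x \<in> a - b" by blast
      qed
      show "a - b \<subseteq> \<Union> (D ` {..<n})"
      proof
        fix x assume x: "x \<in> a - b"
        then have ex: "\<exists>i. i < n \<and> x i \<notin> B i"
          unfolding aA bB by (auto simp: PiE_iff)
        define j where "j = (LEAST i. i < n \<and> x i \<notin> B i)"
        have j: "j < n" "x j \<notin> B j" using LeastI_ex[OF ex] unfolding j_def by auto
        have lt: "i < j \<Longrightarrow> x i \<in> B i" for i
          using not_less_Least[of i "\<lambda>i. i < n \<and> x i \<notin> B i"] j unfolding j_def[symmetric] by auto
        have "x \<in> D j" using x j lt unfolding aA bB D_def by (auto simp: PiE_iff)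
        then show "x \<in> \<Union> (D ` {..<n})" using j by auto
      qed
    qed
  qed
qed

lemma indicator_PiE_prod:
  assumes "x \<in> PiE I (\<lambda>_. UNIV)" "finite I"
  shows "indicator (PiE I F) x = (\<Prod>i\<in>I. indicator (F i) (x i) :: ennreal)"
proof (cases "x \<in> PiE I F")
  case True
  then show ?thesis by (auto simp: PiE_iff intro!: prod.neutral[symmetric])
next
  case False
  then obtain i where "i \<in> I" "x i \<notin> F i" using assms(1) by (auto simp: PiE_iff)
  then have "indicator (F i) (x i) = (0::ennreal)" by simp
  then show ?thesis using False assms(2) \<open>i \<in> I\<close> by (subst prod_zero) auto
qed

lemma prod_emb_UNIV:
  assumes sp: "space M = UNIV" and J: "J \<subseteq> I"
  shows "prod_emb I (\<lambda>_. M) J (PiE J X) = PiE I (\<lambda>i. if i \<in> J then X i else UNIV)"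
  using J unfolding prod_emb_def sp by (auto simp: PiE_iff restrict_def extensional_def) (metis subsetD)

lemma PiM_mu_eq:
  fixes n :: nat
  assumes sp: "space M = UNIV" and J: "J \<subseteq> {..<n}"
  shows "(\<Prod>j\<in>J \<union> {i\<in>{..<n}. emeasure M (space M) \<noteq> 1}. if j \<in> J then emeasure M (X j) else emeasure M (space M))
       = (\<Prod>i<n. emeasure M (if i \<in> J then X i else UNIV))"
proof (cases "emeasure M (space M) = 1")
  case True
  have "(\<Prod>j\<in>J. if j \<in> J then emeasure M (X j) else emeasure M (space M))
      = (\<Prod>i<n. if i \<in> J then emeasure M (X i) else emeasure M (space M))"
    using J True by (intro prod.mono_neutral_left) (auto simp del: lessThan_iff simp: finite_lessThan)
  then show ?thesis using True sp by (simp add: if_distrib, metis sp)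
next
  case False
  then have "J \<union> {i\<in>{..<n}. emeasure M (space M) \<noteq> 1} = {..<n}" using J by auto
  then show ?thesis using sp by (simp add: if_distrib, metis sp)
qed

lemma emeasure_PiM_rect:
  fixes M :: "'a measure" and n :: nat
  assumes sp: "space M = UNIV" and A: "\<And>i. i < n \<Longrightarrow> A i \<in> sets M"
  shows "emeasure (PiM {..<n} (\<lambda>_. M)) (PiE {..<n} A) = (\<Prod>i<n. emeasure M (A i))"
proof (cases "n = 0")
  case True
  then show ?thesis by simp
next
  case False
  then have n: "0 < n" by simp
  have UN: "UNIV \<in> sets M" using sets.top[of M] sp by simp
  let ?G = "\<lambda>J X. prod_emb {..<n} (\<lambda>_. M) J (PiE J X)"
  let ?P = "\<lambda>J X. (J \<noteq> {} \<or> {..<n} = ({}::nat set)) \<and> finite J \<and> J \<subseteq> {..<n} \<and> X \<in> (\<Pi> j\<in>J. sets M)"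
  let ?mu = "\<lambda>J X. (\<Prod>j\<in>J \<union> {i\<in>{..<n}. emeasure M (space M) \<noteq> 1}. if j \<in> J then emeasure M (X j) else emeasure M (space M))"
  define FF where "FF J X = (\<lambda>i. if i \<in> J then X i else (UNIV :: 'a set))" for J :: "nat set" and X :: "nat \<Rightarrow> 'a set"
  have G: "?G J X = PiE {..<n} (FF J X)" if "?P J X" for J X
    unfolding FF_def by (rule prod_emb_UNIV[OF sp]) (use that in blast)
  have mu: "?mu J X = (\<Prod>i<n. emeasure M (FF J X i))" if "?P J X" for J X
    unfolding FF_def by (rule PiM_mu_eq[OF sp]) (use that in blast)
  have FFM: "FF J X i \<in> sets M" if "?P J X" for J X i
    using that UN unfolding FF_def by auto
  have emp: "\<exists>i<n. FF J X i = {}" if "?P J X" "?G J X = {}" for J X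
  proof -
    have "PiE {..<n} (FF J X) = {}" using that G by simp
    then show ?thesis unfolding PiE_eq_empty_iff by blast
  qed
  have mu0: "?mu J X = 0" if P0: "?P J X" "?G J X = {}" for J X
  proof -
    obtain i where i: "i < n" "FF J X i = {}" using emp[OF P0] by blast
    have "emeasure M (FF J X i) = 0" using i by simp
    then show ?thesis unfolding mu[OF P0(1)] using i by (subst prod_zero) (auto intro!: bexI[of _ i])
  qed
  have "emeasure (PiM {..<n} (\<lambda>_. M)) (?G {..<n} A) = ?mu {..<n} A"
  proof (rule extend_measure_caratheodory_pair[OF PiM_def])
    show "?P {..<n} A" using n A by auto
    show "semiring_of_sets (PiE {..<n} (\<lambda>i. space M)) {?G a b | a b. ?P a b}"
    proof -
      have "{?G a b | a b. ?P a b} = rects M n"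
      proof
        show "{?G a b | a b. ?P a b} \<subseteq> rects M n"
        proof
          fix r assume "r \<in> {?G a b | a b. ?P a b}"
          then obtain a b where r: "r = ?G a b" "?P a b" by blast
          show "r \<in> rects M n"
            unfolding rects_def r(1) G[OF r(2)] using FFM[OF r(2)] by blast
        qed
        show "rects M n \<subseteq> {?G a b | a b. ?P a b}"
        proof
          fix r assume "r \<in> rects M n"
          then obtain B where r: "r = PiE {..<n} B" "\<forall>i<n. B i \<in> sets M" by (auto simp: rects_def)
          have P: "?P {..<n} B" using n r by auto
          have "?G {..<n} B = r" unfolding G[OF P] r(1) FF_def by (rule PiE_cong) simp
          then show "r \<in> {?G a b | a b. ?P a b}" using P by blast
        qed
      qed
      then show ?thesis using rects_semiring[OF sp n] sp by simp
    qed
  next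
    fix J X assume "?P J X" "?G J X = {}"
    then show "?mu J X = 0" by (rule mu0)
  next
    fix J X K Y assume P: "?P J X" and Q: "?P K Y" and e: "?G J X = ?G K Y"
    show "?mu J X = ?mu K Y"
    proof (cases "?G J X = {}")
      case True
      have "?mu J X = 0" using mu0[OF P] True by blast
      moreover have "?mu K Y = 0" using mu0[OF Q] True e by simp
      ultimately show ?thesis by (rule trans[OF _ sym])
    next
      case False
      have e': "PiE {..<n} (FF J X) = PiE {..<n} (FF K Y)" using e G[OF P] G[OF Q] by simp
      have ne: "PiE {..<n} (FF J X) \<noteq> {}" using False G[OF P] by simp
      have "\<forall>i\<in>{..<n}. FF J X i = FF K Y i"
        using e' ne unfolding PiE_eq_iff PiE_eq_empty_iff by blast
      then show ?thesis unfolding mu[OF P] mu[OF Q] by (intro prod.cong) auto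
    qed
  next
    fix J X show "0 \<le> ?mu J X" by simp
  next
    fix AA :: "nat \<Rightarrow> nat set" and BB :: "nat \<Rightarrow> nat \<Rightarrow> 'a set" and J X
    assume P: "\<And>m. ?P (AA m) (BB m)" and PJ: "?P J X"
      and disj: "disjoint_family (\<lambda>m. ?G (AA m) (BB m))"
      and un: "(\<Union>m. ?G (AA m) (BB m)) = ?G J X"
    define F where "F m = FF (AA m) (BB m)" for m
    define FJ where "FJ = FF J X"
    have FM: "F m i \<in> sets M" for m i unfolding F_def by (rule FFM[OF P])
    have FJM: "FJ i \<in> sets M" for i unfolding FJ_def by (rule FFM[OF PJ])
    have GF: "?G (AA m) (BB m) = PiE {..<n} (F m)" for m unfolding F_def by (rule G[OF P])
    have GJ: "?G J X = PiE {..<n} FJ" unfolding FJ_def by (rule G[OF PJ])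
    have disj': "disjoint_family (\<lambda>m. PiE {..<n} (F m))" using disj unfolding GF .
    have un': "(\<Union>m. PiE {..<n} (F m)) = PiE {..<n} FJ" using un unfolding GF GJ .
    have "(\<Sum>m. 1 * (\<Prod>i<n. emeasure M (F m i))) = 1 * (\<Prod>i<n. emeasure M (FJ i))"
    proof (rule rect_additive[OF FM FJM])
      fix x :: "nat \<Rightarrow> 'a"
      define x' where "x' = restrict x {..<n}"
      have x': "x' \<in> PiE {..<n} (\<lambda>_. UNIV)" by (simp add: x'_def)
      have pr: "(\<Prod>i<n. indicator (E i) (x i)) = (indicator (PiE {..<n} E) x' :: ennreal)" for E
        by (subst indicator_PiE_prod[OF x']) (auto simp: x'_def intro!: prod.cong)
      have "(\<Sum>m. 1 * (\<Prod>i<n. indicator (F m i) (x i))) = (\<Sum>m. indicator (PiE {..<n} (F m)) x' :: ennreal)"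
        by (simp only: pr mult_1)
      also have "\<dots> = indicator (\<Union>m. PiE {..<n} (F m)) x'"
        using disj' by (rule suminf_indicator)
      also have "\<dots> = indicator (PiE {..<n} FJ) x'"
        by (simp only: un')
      also have "\<dots> = 1 * (\<Prod>i<n. indicator (FJ i) (x i))"
        by (simp only: pr mult_1)
      finally show "(\<Sum>m. 1 * (\<Prod>i<n. indicator (F m i) (x i))) = 1 * (\<Prod>i<n. indicator (FJ i) (x i) :: ennreal)" .
    qed
    then show "(\<Sum>m. ?mu (AA m) (BB m)) = ?mu J X"
      unfolding mu[OF P] mu[OF PJ] F_def FJ_def by simp
  qed
  moreover have "?G {..<n} A = PiE {..<n} A" using sp by (intro prod_emb_PiE_same_index) auto
  moreover have "?mu {..<n} A = (\<Prod>i<n. emeasure M (A i))"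
  proof -
    have P: "?P {..<n} A" using n A by auto
    show ?thesis unfolding mu[OF P] FF_def by (intro prod.cong) auto
  qed
  ultimately show ?thesis by simp
qed

lemma prod_upd_split:
  fixes f :: "nat \<Rightarrow> 'b::comm_monoid_mult"
  assumes "j < n"
  shows "(\<Prod>i<n. f i) = f j * (\<Prod>i\<in>{..<n}-{j}. f i)"
  using assms by (subst prod.remove[of _ j]) auto

lemma meas_prod_coord:
  fixes g :: "nat \<Rightarrow> 'a \<Rightarrow> ennreal"
  assumes g: "\<And>i. g i \<in> borel_measurable M" and I: "I \<subseteq> {..<n}"
  shows "(\<lambda>x. \<Prod>i\<in>I. g i (x i)) \<in> borel_measurable (PiM {..<n} (\<lambda>_. M))"
proof (rule borel_measurable_prod_ennreal)
  fix i assume "i \<in> I"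
  then have "i \<in> {..<n}" using I by auto
  then show "(\<lambda>x. g i (x i)) \<in> borel_measurable (PiM {..<n} (\<lambda>_. M))"
    using g by measurable
qed

lemma nn_integral_PiM_prod_aux:
  fixes M :: "'a measure" and n :: nat
  assumes sp: "space M = UNIV"
  shows "\<forall>g::nat \<Rightarrow> 'a \<Rightarrow> ennreal. (\<forall>i. g i \<in> borel_measurable M) \<longrightarrow>
     (\<forall>i. j \<le> i \<and> i < n \<longrightarrow> (\<exists>A\<in>sets M. g i = indicator A)) \<longrightarrow>
     (\<integral>\<^sup>+x. (\<Prod>i<n. g i (x i)) \<partial>PiM {..<n} (\<lambda>_. M)) = (\<Prod>i<n. \<integral>\<^sup>+t. g i t \<partial>M)"
proof (induction j)
  case 0
  show ?case
  proof (intro allI impI)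
    fix g :: "nat \<Rightarrow> 'a \<Rightarrow> ennreal"
    assume gm: "\<forall>i. g i \<in> borel_measurable M" and gi: "\<forall>i. 0 \<le> i \<and> i < n \<longrightarrow> (\<exists>A\<in>sets M. g i = indicator A)"
    have "\<forall>i. \<exists>A. i < n \<longrightarrow> A \<in> sets M \<and> g i = indicator A" using gi by auto
    then obtain A where A: "\<And>i. i < n \<Longrightarrow> A i \<in> sets M \<and> g i = indicator (A i)" by metis
    have "(\<integral>\<^sup>+x. (\<Prod>i<n. g i (x i)) \<partial>PiM {..<n} (\<lambda>_. M)) = (\<integral>\<^sup>+x. indicator (PiE {..<n} A) x \<partial>PiM {..<n} (\<lambda>_. M))"
    proof (rule nn_integral_cong)
      fix x assume "x \<in> space (PiM {..<n} (\<lambda>_. M))"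
      then have x: "x \<in> PiE {..<n} (\<lambda>_. UNIV)" by (simp add: space_PiM sp)
      show "(\<Prod>i<n. g i (x i)) = indicator (PiE {..<n} A) x"
        by (subst indicator_PiE_prod[OF x]) (auto intro!: prod.cong simp: A)
    qed
    also have "\<dots> = emeasure (PiM {..<n} (\<lambda>_. M)) (PiE {..<n} A)"
      using A by (intro nn_integral_indicator sets_PiM_I_finite) auto
    also have "\<dots> = (\<Prod>i<n. emeasure M (A i))"
      using A by (intro emeasure_PiM_rect[OF sp]) auto
    also have "\<dots> = (\<Prod>i<n. \<integral>\<^sup>+t. g i t \<partial>M)"
      using A by (intro prod.cong) auto
    finally show "(\<integral>\<^sup>+x. (\<Prod>i<n. g i (x i)) \<partial>PiM {..<n} (\<lambda>_. M)) = (\<Prod>i<n. \<integral>\<^sup>+t. g i t \<partial>M)" .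
  qed
next
  case (Suc j)
  show ?case
  proof (intro allI impI)
    fix g :: "nat \<Rightarrow> 'a \<Rightarrow> ennreal"
    assume gm: "\<forall>i. g i \<in> borel_measurable M" and gi: "\<forall>i. Suc j \<le> i \<and> i < n \<longrightarrow> (\<exists>A\<in>sets M. g i = indicator A)"
    show "(\<integral>\<^sup>+x. (\<Prod>i<n. g i (x i)) \<partial>PiM {..<n} (\<lambda>_. M)) = (\<Prod>i<n. \<integral>\<^sup>+t. g i t \<partial>M)"
    proof (cases "j < n")
      case False
      then show ?thesis using Suc.IH gm gi by auto
    next
      case True
      let ?N = "PiM {..<n} (\<lambda>_. M)"
      define R where "R x = (\<Prod>i\<in>{..<n}-{j}. g i (x i))" for x :: "nat \<Rightarrow> 'a"
      define RI where "RI = (\<Prod>i\<in>{..<n}-{j}. \<integral>\<^sup>+t. g i t \<partial>M)"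
      have Rm: "R \<in> borel_measurable ?N" unfolding R_def
        by (rule meas_prod_coord) (use gm in auto)
      have IH: "(\<integral>\<^sup>+x. u (x j) * R x \<partial>?N) = (\<integral>\<^sup>+t. u t \<partial>M) * RI"
        if "u \<in> borel_measurable M" "\<forall>i. j \<le> i \<and> i < n \<longrightarrow> (\<exists>A\<in>sets M. (g(j:=u)) i = indicator A)" for u
      proof -
        have "(\<integral>\<^sup>+x. (\<Prod>i<n. (g(j:=u)) i (x i)) \<partial>?N) = (\<Prod>i<n. \<integral>\<^sup>+t. (g(j:=u)) i t \<partial>M)"
        proof -
          have "\<forall>i. (g(j:=u)) i \<in> borel_measurable M" using that gm by auto
          then show ?thesis using Suc.IH that(2) by blast
        qed
        moreover have "(\<Prod>i<n. (g(j:=u)) i (x i)) = u (x j) * R x" for x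
          unfolding R_def by (subst prod_upd_split[OF True]) (auto intro!: prod.cong)
        moreover have "(\<Prod>i<n. \<integral>\<^sup>+t. (g(j:=u)) i t \<partial>M) = (\<integral>\<^sup>+t. u t \<partial>M) * RI"
          unfolding RI_def by (subst prod_upd_split[OF True]) (auto intro!: prod.cong)
        ultimately show ?thesis by simp
      qed
      have uj: "(\<lambda>x. u (x j)) \<in> borel_measurable ?N" if "u \<in> borel_measurable M" for u :: "'a \<Rightarrow> ennreal"
      proof (rule measurable_compose[OF _ that])
        show "(\<lambda>x. x j) \<in> ?N \<rightarrow>\<^sub>M M"
          using measurable_component_singleton[of j "{..<n}" "\<lambda>_. M"] True by simp
      qed
      have Q: "(\<integral>\<^sup>+x. u (x j) * R x \<partial>?N) = (\<integral>\<^sup>+t. u t \<partial>M) * RI"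
        if "u \<in> borel_measurable M" for u
        using that
      proof (induction rule: borel_measurable_induct)
        case (cong f h)
        then have "f = h" using sp by auto
        then show ?case using cong by simp
      next
        case (set A)
        show ?case
        proof (rule IH)
          show "indicator A \<in> borel_measurable M" using set by simp
          show "\<forall>i. j \<le> i \<and> i < n \<longrightarrow> (\<exists>B\<in>sets M. (g(j := indicator A)) i = indicator B)"
          proof (intro allI impI)
            fix i assume i: "j \<le> i \<and> i < n"
            show "\<exists>B\<in>sets M. (g(j := indicator A)) i = indicator B"
            proof (cases "i = j")
              case True then show ?thesis using set by auto
            next
              case False then have "Suc j \<le> i" using i by auto
              then show ?thesis using gi i False by auto
            qed
          qed
        qed
      next
        case (mult u c)
        have um: "u \<in> borel_measurable M" using mult by blast
        have Pu: "(\<integral>\<^sup>+x. u (x j) * R x \<partial>?N) = (\<integral>\<^sup>+t. u t \<partial>M) * RI" using mult by blast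
        have "(\<integral>\<^sup>+x. c * u (x j) * R x \<partial>?N) = (\<integral>\<^sup>+x. c * (u (x j) * R x) \<partial>?N)"
          by (simp only: mult.assoc)
        also have "\<dots> = c * (\<integral>\<^sup>+x. u (x j) * R x \<partial>?N)"
          using uj[OF um] Rm by (intro nn_integral_cmult borel_measurable_times_ennreal)
        also have "\<dots> = c * ((\<integral>\<^sup>+t. u t \<partial>M) * RI)" by (simp only: Pu)
        also have "\<dots> = (c * (\<integral>\<^sup>+t. u t \<partial>M)) * RI" by (simp only: mult.assoc)
        also have "c * (\<integral>\<^sup>+t. u t \<partial>M) = (\<integral>\<^sup>+t. c * u t \<partial>M)"
          using um by (rule nn_integral_cmult[symmetric])
        finally show ?case .
      next
        case (add u v)
        have um: "u \<in> borel_measurable M" and vm: "v \<in> borel_measurable M" using add by blast+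
        have Pu: "(\<integral>\<^sup>+x. u (x j) * R x \<partial>?N) = (\<integral>\<^sup>+t. u t \<partial>M) * RI" using add by blast
        have Pv: "(\<integral>\<^sup>+x. v (x j) * R x \<partial>?N) = (\<integral>\<^sup>+t. v t \<partial>M) * RI" using add by blast
        have "(\<integral>\<^sup>+x. (v (x j) + u (x j)) * R x \<partial>?N) = (\<integral>\<^sup>+x. v (x j) * R x + u (x j) * R x \<partial>?N)"
          by (simp only: distrib_right)
        also have "\<dots> = (\<integral>\<^sup>+x. v (x j) * R x \<partial>?N) + (\<integral>\<^sup>+x. u (x j) * R x \<partial>?N)"
          by (rule nn_integral_add; rule borel_measurable_times_ennreal[OF uj Rm]; fact)
        also have "\<dots> = (\<integral>\<^sup>+t. v t \<partial>M) * RI + (\<integral>\<^sup>+t. u t \<partial>M) * RI" by (simp only: Pu Pv)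
        also have "\<dots> = ((\<integral>\<^sup>+t. v t \<partial>M) + (\<integral>\<^sup>+t. u t \<partial>M)) * RI" by (simp only: distrib_right)
        also have "(\<integral>\<^sup>+t. v t \<partial>M) + (\<integral>\<^sup>+t. u t \<partial>M) = (\<integral>\<^sup>+t. v t + u t \<partial>M)"
          using vm um by (rule nn_integral_add[symmetric])
        finally show ?case .
      next
        case (seq U)
        have Um: "\<And>k. U k \<in> borel_measurable M" using seq by blast
        have PU: "\<And>k. (\<integral>\<^sup>+x. U k (x j) * R x \<partial>?N) = (\<integral>\<^sup>+t. U k t \<partial>M) * RI" using seq by blast
        have inc: "incseq U" using seq by blast
        have "(\<integral>\<^sup>+x. (SUP k. U k) (x j) * R x \<partial>?N) = (\<integral>\<^sup>+x. (SUP k. U k (x j) * R x) \<partial>?N)"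
          by (simp add: SUP_mult_right_ennreal image_comp)
        also have "\<dots> = (SUP k. \<integral>\<^sup>+x. U k (x j) * R x \<partial>?N)"
        proof (rule nn_integral_monotone_convergence_SUP)
          show "incseq (\<lambda>k x. U k (x j) * R x)"
            using inc by (auto simp: incseq_def le_fun_def intro!: mult_right_mono)
          show "\<And>k. (\<lambda>x. U k (x j) * R x) \<in> borel_measurable ?N"
            using uj[OF Um] Rm by (intro borel_measurable_times_ennreal)
        qed
        also have "\<dots> = (SUP k. (\<integral>\<^sup>+t. U k t \<partial>M) * RI)" by (simp only: PU)
        also have "\<dots> = (SUP k. \<integral>\<^sup>+t. U k t \<partial>M) * RI" by (simp only: SUP_mult_right_ennreal)
        also have "(SUP k. \<integral>\<^sup>+t. U k t \<partial>M) = (\<integral>\<^sup>+t. (SUP k. U k t) \<partial>M)"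
          using inc Um by (rule nn_integral_monotone_convergence_SUP[symmetric])
        finally show ?case by (simp add: image_comp)
      qed
      have "(\<Prod>i<n. g i (x i)) = g j (x j) * R x" for x
        unfolding R_def by (rule prod_upd_split[OF True])
      moreover have "(\<Prod>i<n. \<integral>\<^sup>+t. g i t \<partial>M) = (\<integral>\<^sup>+t. g j t \<partial>M) * RI"
        unfolding RI_def by (rule prod_upd_split[OF True])
      ultimately show ?thesis using Q[of "g j"] gm by simp
    qed
  qed
qed

lemma nn_integral_PiM_prod:
  fixes M :: "'a measure" and n :: nat and g :: "nat \<Rightarrow> 'a \<Rightarrow> ennreal"
  assumes sp: "space M = UNIV" and g: "\<And>i. g i \<in> borel_measurable M"
  shows "(\<integral>\<^sup>+x. (\<Prod>i<n. g i (x i)) \<partial>PiM {..<n} (\<lambda>_. M)) = (\<Prod>i<n. \<integral>\<^sup>+t. g i t \<partial>M)"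
proof -
  have "\<forall>i. g i \<in> borel_measurable M" using g by blast
  moreover have "\<forall>i. n \<le> i \<and> i < n \<longrightarrow> (\<exists>A\<in>sets M. g i = indicator A)" by auto
  ultimately show ?thesis using nn_integral_PiM_prod_aux[OF sp, of n n] by blast
qed

lemma psi_word_append: "psi_word \<Psi> (xs @ ys) = psi_word \<Psi> xs ** psi_word \<Psi> ys"
  by (induction xs) (auto simp: matrix_mul_assoc)

lemma psi_word_snoc: "psi_word \<Psi> (xs @ [y]) = psi_word \<Psi> xs ** \<Psi> y"
  by (simp add: psi_word_append)

lemma map_upt_Suc: "map w [0..<Suc k] = map w [0..<k] @ [w k]" by simp

lemma meas_Psi_entry:
  fixes \<Psi> :: "'a \<Rightarrow> real^'q::finite^'q"
  assumes "\<Psi> \<in> borel_measurable M"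
  shows "(\<lambda>x. \<Psi> x $ i $ j) \<in> borel_measurable M"
proof -
  have "continuous_on UNIV (\<lambda>v::real^'q^'q. v $ i $ j)"
    by (rule continuous_at_imp_continuous_on) simp
  then have "(\<lambda>v::real^'q^'q. v $ i $ j) \<in> borel_measurable borel"
    by (rule borel_measurable_continuous_onI)
  from measurable_compose[OF assms this] show ?thesis .
qed


lemma mat_mult_entry: "(A ** B) $ i $ j = (\<Sum>l\<in>UNIV. A $ i $ l * B $ l $ j)"
  by (simp add: matrix_matrix_mult_def)

lemma meas_psi_word:
  fixes \<Psi> :: "'a \<Rightarrow> real^'q::finite^'q"
  assumes Pm: "\<Psi> \<in> borel_measurable M"
  shows "k \<le> n \<Longrightarrow> (\<lambda>w. psi_word \<Psi> (map w [0..<k]) $ i $ j) \<in> borel_measurable (PiM {..<n} (\<lambda>_. M))"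
proof (induction k arbitrary: i j)
  case 0
  then show ?case by simp
next
  case (Suc k)
  have c: "(\<lambda>w. w k) \<in> PiM {..<n} (\<lambda>_. M) \<rightarrow>\<^sub>M M"
    using measurable_component_singleton[of k "{..<n}" "\<lambda>_. M"] Suc.prems by simp
  have e: "(\<lambda>w. \<Psi> (w k) $ l $ j) \<in> borel_measurable (PiM {..<n} (\<lambda>_. M))" for l
    using measurable_compose[OF c meas_Psi_entry[OF Pm]] .
  have "(\<lambda>w. \<Sum>l\<in>UNIV. psi_word \<Psi> (map w [0..<k]) $ i $ l * \<Psi> (w k) $ l $ j) \<in> borel_measurable (PiM {..<n} (\<lambda>_. M))"
    using Suc e by (intro borel_measurable_sum borel_measurable_times) auto
  then show ?case by (simp only: map_upt_Suc psi_word_snoc mat_mult_entry)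
qed

lemma psi_word_nonneg:
  assumes "\<And>x i j. 0 \<le> \<Psi> x $ i $ j"
  shows "0 \<le> psi_word \<Psi> xs $ i $ j"
  using assms by (induction xs arbitrary: i j) (auto simp: mat_mult_entry mat_def intro!: sum_nonneg)

definition msum :: "real^'q^'q \<Rightarrow> real" where
  "msum A = (\<Sum>i\<in>UNIV. \<Sum>j\<in>UNIV. A $ i $ j)"

lemma msum_mult_le:
  fixes A B :: "real^'q::finite^'q"
  assumes A: "\<And>i j. 0 \<le> A $ i $ j" and B: "\<And>i j. 0 \<le> B $ i $ j"
  shows "msum (A ** B) \<le> msum A * msum B"
proof -
  have rowB: "(\<Sum>j\<in>UNIV. B $ l $ j) \<le> msum B" for l
    unfolding msum_def using B
    by (intro member_le_sum[where f="\<lambda>i. \<Sum>j\<in>UNIV. B $ i $ j"] sum_nonneg) auto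
  have "msum (A ** B) = (\<Sum>i\<in>UNIV. \<Sum>j\<in>UNIV. \<Sum>l\<in>UNIV. A $ i $ l * B $ l $ j)"
    unfolding msum_def mat_mult_entry ..
  also have "\<dots> = (\<Sum>i\<in>UNIV. \<Sum>l\<in>UNIV. \<Sum>j\<in>UNIV. A $ i $ l * B $ l $ j)"
    by (rule sum.cong[OF refl], rule sum.swap)
  also have "\<dots> = (\<Sum>i\<in>UNIV. \<Sum>l\<in>UNIV. A $ i $ l * (\<Sum>j\<in>UNIV. B $ l $ j))"
    by (simp only: sum_distrib_left)
  also have "\<dots> \<le> (\<Sum>i\<in>UNIV. \<Sum>l\<in>UNIV. A $ i $ l * msum B)"
    using A rowB by (intro sum_mono mult_left_mono) auto
  also have "\<dots> = msum A * msum B"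
    unfolding msum_def by (simp add: sum_distrib_right)
  finally show ?thesis .
qed

lemma entry_le_msum:
  fixes A :: "real^'q::finite^'q"
  assumes A: "\<And>i j. 0 \<le> A $ i $ j"
  shows "A $ i $ j \<le> msum A"
proof -
  have "A $ i $ j \<le> (\<Sum>j\<in>UNIV. A $ i $ j)" using A by (intro member_le_sum) auto
  also have "\<dots> \<le> msum A" unfolding msum_def using A
    by (intro member_le_sum[where f="\<lambda>i. \<Sum>j\<in>UNIV. A $ i $ j"] sum_nonneg) auto
  finally show ?thesis .
qed

lemma msum_psi_word_le:
  fixes \<Psi> :: "'a \<Rightarrow> real^'q::finite^'q"
  assumes nn: "\<And>x i j. 0 \<le> \<Psi> x $ i $ j"
  shows "msum (psi_word \<Psi> (map w [0..<k])) \<le> real CARD('q) * (\<Prod>l<k. msum (\<Psi> (w l)))"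
proof (induction k)
  case 0
  have "msum (mat 1 :: real^'q^'q) = real CARD('q)"
    unfolding msum_def mat_def by (simp add: if_distrib sum.delta)
  then show ?case by simp
next
  case (Suc k)
  have "msum (psi_word \<Psi> (map w [0..<Suc k])) \<le> msum (psi_word \<Psi> (map w [0..<k])) * msum (\<Psi> (w k))"
    unfolding map_upt_Suc psi_word_snoc
    by (rule msum_mult_le) (auto intro: psi_word_nonneg nn)
  also have "\<dots> \<le> real CARD('q) * (\<Prod>l<k. msum (\<Psi> (w l))) * msum (\<Psi> (w k))"
    using Suc nn by (intro mult_right_mono) (auto simp: msum_def intro!: sum_nonneg)
  finally show ?case by (simp add: ac_simps)
qed

lemma integrable_psi_word:
  fixes \<Psi> :: "'a \<Rightarrow> real^'q::finite^'q" and M :: "'a measure"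
  assumes sp: "space M = UNIV" and Pm: "\<Psi> \<in> borel_measurable M"
    and nn: "\<And>x i j. 0 \<le> \<Psi> x $ i $ j"
    and int: "\<And>i j. integrable M (\<lambda>x. \<Psi> x $ i $ j)"
  shows "integrable (PiM {..<n} (\<lambda>_. M)) (\<lambda>w. psi_word \<Psi> (map w [0..<n]) $ i $ j)"
proof (rule integrableI_bounded)
  let ?N = "PiM {..<n} (\<lambda>_. M)"
  define s where "s x = msum (\<Psi> x)" for x
  have s0: "0 \<le> s x" for x unfolding s_def msum_def using nn by (intro sum_nonneg) auto
  have sint: "integrable M s" unfolding s_def msum_def using int by auto
  have sm: "s \<in> borel_measurable M" using sint by auto
  have sfin: "(\<integral>\<^sup>+t. ennreal (s t) \<partial>M) < \<infinity>"
    using sint s0 by (simp add: integrable_iff_bounded)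
  show "(\<lambda>w. psi_word \<Psi> (map w [0..<n]) $ i $ j) \<in> borel_measurable ?N"
    by (rule meas_psi_word[OF Pm]) simp
  have "(\<integral>\<^sup>+w. ennreal (norm (psi_word \<Psi> (map w [0..<n]) $ i $ j)) \<partial>?N)
      \<le> (\<integral>\<^sup>+w. ennreal (real CARD('q)) * (\<Prod>l<n. ennreal (s (w l))) \<partial>?N)"
  proof (rule nn_integral_mono)
    fix w
    have "norm (psi_word \<Psi> (map w [0..<n]) $ i $ j) = psi_word \<Psi> (map w [0..<n]) $ i $ j"
      using psi_word_nonneg[of \<Psi> "map w [0..<n]" i j] nn by simp
    also have "\<dots> \<le> msum (psi_word \<Psi> (map w [0..<n]))"
      by (rule entry_le_msum) (rule psi_word_nonneg, rule nn)
    also have "\<dots> \<le> real CARD('q) * (\<Prod>l<n. s (w l))"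
      unfolding s_def by (rule msum_psi_word_le[OF nn])
    finally have "ennreal (norm (psi_word \<Psi> (map w [0..<n]) $ i $ j)) \<le> ennreal (real CARD('q) * (\<Prod>l<n. s (w l)))"
      by (rule ennreal_leI)
    also have "\<dots> = ennreal (real CARD('q)) * (\<Prod>l<n. ennreal (s (w l)))"
      using s0 by (simp add: ennreal_mult prod_ennreal prod_nonneg)
    finally show "ennreal (norm (psi_word \<Psi> (map w [0..<n]) $ i $ j)) \<le> ennreal (real CARD('q)) * (\<Prod>l<n. ennreal (s (w l)))" .
  qed
  also have "\<dots> = ennreal (real CARD('q)) * (\<integral>\<^sup>+w. (\<Prod>l<n. ennreal (s (w l))) \<partial>?N)"
    by (rule nn_integral_cmult) (rule meas_prod_coord, use sm in auto)
  also have "\<dots> = ennreal (real CARD('q)) * (\<Prod>l<n. \<integral>\<^sup>+t. ennreal (s t) \<partial>M)"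
    using nn_integral_PiM_prod[OF sp, of "\<lambda>_ t. ennreal (s t)" n] sm by simp
  also have "\<dots> < \<infinity>"
    using sfin by (simp add: ennreal_mult_less_top power_less_top_ennreal)
  finally show "(\<integral>\<^sup>+w. ennreal (norm (psi_word \<Psi> (map w [0..<n]) $ i $ j)) \<partial>?N) < \<infinity>" .
qed

lemma vm_ones: "((\<pi>::real^'q::finite) v* A) \<bullet> ones = (\<Sum>j\<in>UNIV. \<Sum>i\<in>UNIV. A $ i $ j * \<pi> $ i)"
  by (simp add: inner_vec_def vector_matrix_mult_def ones_def ac_simps)

lemma vm_ones_diff: "((\<pi>1::real^'q::finite) v* A) \<bullet> ones - (\<pi>2 v* A) \<bullet> ones = ((\<pi>1 - \<pi>2) v* A) \<bullet> ones"
  by (simp add: vm_ones sum_subtractf right_diff_distrib)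

lemma vm_ones_neg: "((- \<pi>::real^'q::finite) v* A) \<bullet> ones = - ((\<pi> v* A) \<bullet> ones)"
  by (simp add: vm_ones sum_negf)

lemma word_integral_eq:
  fixes \<Psi> :: "'a \<Rightarrow> real^'q::finite^'q" and M :: "'a measure"
  assumes sp: "space M = UNIV" and Pm: "\<Psi> \<in> borel_measurable M"
    and nn: "\<And>x i j. 0 \<le> \<Psi> x $ i $ j"
    and int: "\<And>i j. integrable M (\<lambda>x. \<Psi> x $ i $ j)"
    and E: "E \<in> sets (PiM {..<n} (\<lambda>_. M))"
  shows "(\<pi> v* word_integral M \<Psi> n E) \<bullet> ones =
     set_lebesgue_integral (PiM {..<n} (\<lambda>_. M)) E (\<lambda>w. (\<pi> v* psi_word \<Psi> (map w [0..<n])) \<bullet> ones)"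
proof -
  let ?N = "PiM {..<n} (\<lambda>_. M)"
  let ?P = "\<lambda>w. psi_word \<Psi> (map w [0..<n])"
  have I: "integrable ?N (\<lambda>w. indicator E w *\<^sub>R ?P w $ i $ j)" for i j
    by (rule integrable_mult_indicator[OF E integrable_psi_word[OF sp Pm nn int]])
  have I2: "integrable ?N (\<lambda>w. indicator E w *\<^sub>R ?P w $ i $ j * \<pi> $ i)" for i j
    using I[of i j] by (rule integrable_mult_left)
  have "(\<pi> v* word_integral M \<Psi> n E) \<bullet> ones
     = (\<Sum>j\<in>UNIV. \<Sum>i\<in>UNIV. (LINT w|?N. indicator E w *\<^sub>R ?P w $ i $ j) * \<pi> $ i)"
    unfolding vm_ones word_integral_def set_lebesgue_integral_def by simp
  also have "\<dots> = (\<Sum>j\<in>UNIV. \<Sum>i\<in>UNIV. (LINT w|?N. indicator E w *\<^sub>R ?P w $ i $ j * \<pi> $ i))"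
    by simp
  also have "\<dots> = (\<Sum>j\<in>UNIV. LINT w|?N. (\<Sum>i\<in>UNIV. indicator E w *\<^sub>R ?P w $ i $ j * \<pi> $ i))"
    using I2 by (simp del: integral_mult_left_zero integral_mult_right_zero)
  also have "\<dots> = (LINT w|?N. (\<Sum>j\<in>UNIV. \<Sum>i\<in>UNIV. indicator E w *\<^sub>R ?P w $ i $ j * \<pi> $ i))"
    using I2 by (simp del: integral_mult_left_zero integral_mult_right_zero)
  also have "\<dots> = set_lebesgue_integral ?N E (\<lambda>w. (\<pi> v* ?P w) \<bullet> ones)"
    unfolding set_lebesgue_integral_def vm_ones
    by (rule Bochner_Integration.integral_cong) (simp_all add: sum_distrib_left ac_simps)
  finally show ?thesis .
qed

lemma tendsto_matmul:
  fixes f g :: "'b \<Rightarrow> real^'q::finite^'q"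
  assumes "(f \<longlongrightarrow> A) F" "(g \<longlongrightarrow> B) F"
  shows "((\<lambda>x. f x ** g x) \<longlongrightarrow> A ** B) F"
  unfolding matrix_matrix_mult_def by (intro tendsto_intros assms)

lemma matmul_eps_delta:
  fixes A B :: "real^'q::finite^'q"
  assumes e: "e > 0"
  shows "\<exists>d>0. \<forall>A' B'. dist A' A < d \<longrightarrow> dist B' B < d \<longrightarrow> dist (A' ** B') (A ** B) < e"
proof -
  have "((\<lambda>p. fst p ** snd p) \<longlongrightarrow> fst (A, B) ** snd (A, B)) (at (A, B))"
    by (intro tendsto_matmul tendsto_fst tendsto_snd tendsto_ident_at)
  then have "eventually (\<lambda>p. dist (fst p ** snd p) (A ** B) < e) (at (A, B))"
    using e by (auto simp: tendsto_iff)
  then obtain d where d: "d > 0" and dd: "\<And>p. p \<noteq> (A, B) \<Longrightarrow> dist p (A, B) < d \<Longrightarrow> dist (fst p ** snd p) (A ** B) < e"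
    unfolding eventually_at by auto
  show ?thesis
  proof (intro exI[of _ "d/2"] conjI allI impI)
    show "d/2 > 0" using d by simp
    fix A' B' assume a: "dist A' A < d/2" and b: "dist B' B < d/2"
    show "dist (A' ** B') (A ** B) < e"
    proof (cases "(A', B') = (A, B)")
      case True then show ?thesis using e by auto
    next
      case False
      have "dist (A', B') (A, B) \<le> \<bar>dist A' A\<bar> + \<bar>dist B' B\<bar>"
        unfolding dist_Pair_Pair by (rule sqrt_sum_squares_le_sum_abs)
      also have "\<dots> < d" using a b by simp
      finally show ?thesis using dd[OF False] by simp
    qed
  qed
qed

definition Gf :: "('a \<Rightarrow> real^'q::finite^'q) \<Rightarrow> real^'q \<Rightarrow> real^'q^'q \<Rightarrow> 'a list \<Rightarrow> real" where
  "Gf \<Psi> \<sigma> L xs = (\<sigma> v* (L ** psi_word \<Psi> xs)) \<bullet> ones"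

lemma Gf_Cons: "Gf \<Psi> \<sigma> L (x # xs) = Gf \<Psi> \<sigma> (L ** \<Psi> x) xs"
  by (simp add: Gf_def matrix_mul_assoc)

lemma Gf_cont:
  fixes \<sigma> :: "real^'q::finite"
  assumes "Gf \<Psi> \<sigma> L [] > 0"
  shows "\<exists>d>0. \<forall>L'. dist L' L < d \<longrightarrow> Gf \<Psi> \<sigma> L' [] > 0"
proof -
  have eq: "Gf \<Psi> \<sigma> L' [] = (\<Sum>j\<in>UNIV. \<Sum>i\<in>UNIV. L' $ i $ j * \<sigma> $ i)" for L'
    by (simp add: Gf_def vm_ones)
  have "((\<lambda>L'. \<Sum>j\<in>UNIV. \<Sum>i\<in>UNIV. L' $ i $ j * \<sigma> $ i) \<longlongrightarrow> (\<Sum>j\<in>UNIV. \<Sum>i\<in>UNIV. L $ i $ j * \<sigma> $ i)) (at L)"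
    by (intro tendsto_intros)
  then have "eventually (\<lambda>L'. dist (Gf \<Psi> \<sigma> L' []) (Gf \<Psi> \<sigma> L []) < Gf \<Psi> \<sigma> L []) (at L)"
    using assms unfolding eq[symmetric] by (auto simp: tendsto_iff)
  then obtain d where d: "d > 0" and dd: "\<And>L'. L' \<noteq> L \<Longrightarrow> dist L' L < d \<Longrightarrow> dist (Gf \<Psi> \<sigma> L' []) (Gf \<Psi> \<sigma> L []) < Gf \<Psi> \<sigma> L []"
    unfolding eventually_at by auto
  show ?thesis
  proof (intro exI[of _ d] conjI allI impI)
    fix L' assume "dist L' L < d"
    then show "Gf \<Psi> \<sigma> L' [] > 0"
      using dd[of L'] assms by (cases "L' = L") (auto simp: dist_real_def)
  qed (rule d)
qed


lemma topo_main:
  fixes \<Psi> :: "'a::topological_space \<Rightarrow> real^'q::finite^'q" and C :: "'a set" and \<sigma> :: "real^'q"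
  assumes Copen: "open C" and Ccont: "continuous_on C \<Psi>"
    and seq: "\<And>x. x \<notin> C \<Longrightarrow> \<exists>s::nat\<Rightarrow>'a. (\<forall>n. s n \<in> C) \<and> s \<longlonglongrightarrow> x \<and> (\<lambda>n. \<Psi> (s n)) \<longlonglongrightarrow> \<Psi> x"
  shows "Gf \<Psi> \<sigma> L xs > 0 \<Longrightarrow> \<exists>Us d. length Us = length xs \<and> d > 0 \<and> (\<forall>U\<in>set Us. open U \<and> U \<noteq> {}) \<and>
          (\<forall>L' zs. dist L' L < d \<longrightarrow> length zs = length xs \<longrightarrow> (\<forall>k<length xs. zs!k \<in> Us!k) \<longrightarrow> Gf \<Psi> \<sigma> L' zs > 0)"
proof (induction xs arbitrary: L)
  case Nil
  then obtain d where "d > 0" "\<forall>L'. dist L' L < d \<longrightarrow> Gf \<Psi> \<sigma> L' [] > 0" using Gf_cont by blast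
  then show ?case by (intro exI[of _ "[]"] exI[of _ d]) auto
next
  case (Cons x xs)
  define L0 where "L0 = L ** \<Psi> x"
  have "Gf \<Psi> \<sigma> L0 xs > 0" using Cons.prems by (simp add: Gf_Cons L0_def)
  from Cons.IH[OF this] obtain Us d where Us: "length Us = length xs" "d > 0" "\<forall>U\<in>set Us. open U \<and> U \<noteq> {}"
    and good: "\<And>L' zs. dist L' L0 < d \<Longrightarrow> length zs = length xs \<Longrightarrow> (\<forall>k<length xs. zs!k \<in> Us!k) \<Longrightarrow> Gf \<Psi> \<sigma> L' zs > 0"
    by blast
  have "\<exists>c\<in>C. dist (L ** \<Psi> c) L0 < d/2"
  proof (cases "x \<in> C")
    case True then show ?thesis using Us(2) unfolding L0_def by (intro bexI[of _ x]) auto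
  next
    case False
    then obtain s where s: "\<forall>n. s n \<in> C" "(\<lambda>n. \<Psi> (s n)) \<longlonglongrightarrow> \<Psi> x" using seq by blast
    have "(\<lambda>n. L ** \<Psi> (s n)) \<longlonglongrightarrow> L0" unfolding L0_def
      by (intro tendsto_matmul tendsto_const s(2))
    then have "eventually (\<lambda>n. dist (L ** \<Psi> (s n)) L0 < d/2) sequentially"
      using Us(2) unfolding tendsto_iff by (metis half_gt_zero)
    then obtain k where "dist (L ** \<Psi> (s k)) L0 < d/2" by (meson eventually_sequentially order_refl)
    then show ?thesis using s(1) by blast
  qed
  then obtain c where c: "c \<in> C" "dist (L ** \<Psi> c) L0 < d/2" by blast
  obtain eta where eta: "eta > 0" and eta_d: "\<And>A' B'. dist A' L < eta \<Longrightarrow> dist B' (\<Psi> c) < eta \<Longrightarrow> dist (A' ** B') (L ** \<Psi> c) < d/2"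
    using matmul_eps_delta[of "d/2" L "\<Psi> c"] Us(2) by auto
  have "(\<Psi> \<longlongrightarrow> \<Psi> c) (at c within C)" using Ccont c(1) unfolding continuous_on_def by blast
  then have "eventually (\<lambda>z. dist (\<Psi> z) (\<Psi> c) < eta) (at c within C)"
    using eta unfolding tendsto_iff by blast
  then obtain S0 where S0: "open S0" "c \<in> S0" "\<And>z. z \<in> S0 \<Longrightarrow> z \<noteq> c \<Longrightarrow> z \<in> C \<Longrightarrow> dist (\<Psi> z) (\<Psi> c) < eta"
    unfolding eventually_at_topological by blast
  define S where "S = S0 \<inter> C"
  have S: "open S" "c \<in> S" using S0 Copen c(1) by (auto simp: S_def)
  have Sc: "dist (\<Psi> z) (\<Psi> c) < eta" if "z \<in> S" for z
    using S0(3)[of z] that eta by (cases "z = c") (auto simp: S_def)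
  show ?case
  proof (intro exI[of _ "S # Us"] exI[of _ eta] conjI allI impI)
    show "length (S # Us) = length (x # xs)" using Us(1) by simp
    show "eta > 0" by (rule eta)
    show "\<forall>U\<in>set (S # Us). open U \<and> U \<noteq> {}" using S Us(3) by auto
    fix L' zs assume L': "dist L' L < eta" and len: "length zs = length (x # xs)"
      and zin: "\<forall>k<length (x # xs). zs ! k \<in> (S # Us) ! k"
    obtain z zs' where zs: "zs = z # zs'" using len by (cases zs) auto
    have z: "z \<in> S" using zin zs by force
    have zs': "\<forall>k<length xs. zs' ! k \<in> Us ! k"
    proof (intro allI impI)
      fix k assume "k < length xs"
      then show "zs' ! k \<in> Us ! k" using zin[rule_format, of "Suc k"] zs by simp
    qed
    have "dist (L' ** \<Psi> z) (L ** \<Psi> c) < d/2" using eta_d[OF L' Sc[OF z]] .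
    then have "dist (L' ** \<Psi> z) L0 < d" using c(2) dist_triangle_half_r[of "L ** \<Psi> c" "L' ** \<Psi> z" d L0]
      by (simp add: dist_commute)
    then have "Gf \<Psi> \<sigma> (L' ** \<Psi> z) zs' > 0" using good zs' len zs by simp
    then show "Gf \<Psi> \<sigma> L' zs > 0" by (simp add: zs Gf_Cons)
  qed
qed

lemma no_pos_word:
  fixes M :: "'a::topological_space measure" and \<Psi> :: "'a \<Rightarrow> real^'q::finite^'q" and \<sigma> :: "real^'q"
  assumes H: "is_HMM M \<Psi>"
    and Z: "\<forall>n. \<forall>E\<in>sets (prod_meas M n).
      set_lebesgue_integral (prod_meas M n) E (\<lambda>w. (\<sigma> v* psi_word \<Psi> (map w [0..<n])) \<bullet> ones) = 0"
  shows "(\<sigma> v* psi_word \<Psi> ws) \<bullet> ones \<le> 0"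
proof (rule ccontr)
  assume "\<not> (\<sigma> v* psi_word \<Psi> ws) \<bullet> ones \<le> 0"
  then have pos: "Gf \<Psi> \<sigma> (mat 1) ws > 0" by (simp add: Gf_def)
  have sp: "space M = UNIV" and opens: "\<And>U. open U \<Longrightarrow> U \<in> sets M"
    and opos: "\<And>U. open U \<Longrightarrow> U \<noteq> {} \<Longrightarrow> emeasure M U > 0"
    and Pm: "\<Psi> \<in> borel_measurable M" and nn: "\<And>x i j. 0 \<le> \<Psi> x $ i $ j"
    and pc: "piecewise_continuous \<Psi>" and int: "\<And>i j. integrable M (\<lambda>x. \<Psi> x $ i $ j)"
    using H unfolding is_HMM_def admissible_space_def by auto
  obtain C where Copen: "open C" and Ccont: "continuous_on C \<Psi>"
    and seq: "\<And>x. x \<notin> C \<Longrightarrow> \<exists>s::nat\<Rightarrow>'a. (\<forall>n. s n \<in> C) \<and> s \<longlonglongrightarrow> x \<and> (\<lambda>n. \<Psi> (s n)) \<longlonglongrightarrow> \<Psi> x"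
    using pc unfolding piecewise_continuous_def by blast
  obtain Us d where Us: "length Us = length ws" "d > 0" "\<forall>U\<in>set Us. open U \<and> U \<noteq> {}"
    and good: "\<And>L' zs. dist L' (mat 1) < d \<Longrightarrow> length zs = length ws \<Longrightarrow> (\<forall>k<length ws. zs!k \<in> Us!k) \<Longrightarrow> Gf \<Psi> \<sigma> L' zs > 0"
    using topo_main[OF Copen Ccont seq pos] by blast
  define n where "n = length ws"
  define U where "U k = Us ! k" for k
  have Uo: "open (U k)" "U k \<noteq> {}" if "k < n" for k
    using Us(3) that Us(1) nth_mem[of k Us] unfolding U_def n_def by auto
  let ?N = "prod_meas M n"
  define E where "E = PiE {..<n} U"
  have Es: "E \<in> sets ?N" unfolding E_def by (rule sets_PiM_I_finite) (auto intro: opens Uo)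
  define f where "f w = (\<sigma> v* psi_word \<Psi> (map w [0..<n])) \<bullet> ones" for w
  have fpos: "f w > 0" if "w \<in> E" for w
  proof -
    have "Gf \<Psi> \<sigma> (mat 1) (map w [0..<n]) > 0"
      using that Us(2) by (intro good) (auto simp: E_def U_def n_def PiE_iff)
    then show ?thesis by (simp add: Gf_def f_def)
  qed
  have fint: "integrable ?N f"
  proof -
    have "integrable ?N (\<lambda>w. \<Sum>j\<in>UNIV. \<Sum>i\<in>UNIV. psi_word \<Psi> (map w [0..<n]) $ i $ j * \<sigma> $ i)"
      using integrable_psi_word[OF sp Pm nn int] by auto
    then show ?thesis unfolding f_def vm_ones .
  qed
  define g where "g w = indicator E w *\<^sub>R f w" for w
  have gint: "integrable ?N g" unfolding g_def by (rule integrable_mult_indicator[OF Es fint])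
  have g0: "0 \<le> g w" for w using fpos[of w] by (cases "w \<in> E") (auto simp: g_def)
  have "integral\<^sup>L ?N g = 0" using Z Es unfolding g_def f_def set_lebesgue_integral_def by blast
  then have "AE w in ?N. g w = 0" using integral_nonneg_eq_0_iff_AE[OF gint] g0 by simp
  then have "AE w in ?N. w \<notin> E"
    by (rule eventually_mono) (use fpos in \<open>force simp: g_def\<close>)
  then have "emeasure ?N E = 0"
    using AE_iff_measurable[OF Es, of "\<lambda>w. w \<notin> E"] sets.sets_into_space[OF Es] by auto
  moreover have "emeasure ?N E = (\<Prod>k<n. emeasure M (U k))"
    unfolding E_def by (rule emeasure_PiM_rect[OF sp]) (auto intro: opens Uo)
  moreover have "(\<Prod>k<n. emeasure M (U k)) \<noteq> 0"
  proof -
    have "emeasure M (U k) \<noteq> 0" if "k < n" for k using opos[OF Uo(1)[OF that] Uo(2)[OF that]] by simp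
    then show ?thesis by (simp add: ennreal_prod_eq_0)
  qed
  ultimately show False by simp
qed

theorem proposition7:
  fixes M :: "'a::topological_space measure"
    and \<Psi> :: "'a \<Rightarrow> real^'q::finite^'q"
    and \<pi>1 \<pi>2 :: "real^'q"
  assumes "is_HMM M \<Psi>"
  shows "hmm_equiv M \<Psi> \<pi>1 \<pi>2 \<longleftrightarrow>
         (\<forall>v \<in> span {psi_word \<Psi> w *v ones | w. True}. orthogonal (\<pi>1 - \<pi>2) v)"
proof -
  have sp: "space M = UNIV"
    and Pm: "\<Psi> \<in> borel_measurable M" and nn: "\<And>x i j. 0 \<le> \<Psi> x $ i $ j"
    and int: "\<And>i j. integrable M (\<lambda>x. \<Psi> x $ i $ j)"
    using assms unfolding is_HMM_def admissible_space_def by auto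
  define SI where "SI \<sigma> n E = set_lebesgue_integral (prod_meas M n) E (\<lambda>w. (\<sigma> v* psi_word \<Psi> (map w [0..<n])) \<bullet> ones)"
    for \<sigma> :: "real^'q" and n E
  have eqv: "hmm_equiv M \<Psi> \<pi>1 \<pi>2 \<longleftrightarrow> (\<forall>n. \<forall>E\<in>sets (prod_meas M n). SI (\<pi>1 - \<pi>2) n E = 0)"
  proof -
    have "(\<pi>1 v* word_integral M \<Psi> n E) \<bullet> ones = (\<pi>2 v* word_integral M \<Psi> n E) \<bullet> ones
        \<longleftrightarrow> SI (\<pi>1 - \<pi>2) n E = 0" if "E \<in> sets (prod_meas M n)" for n E
    proof -
      have "(\<pi>1 v* word_integral M \<Psi> n E) \<bullet> ones = (\<pi>2 v* word_integral M \<Psi> n E) \<bullet> ones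
          \<longleftrightarrow> ((\<pi>1 - \<pi>2) v* word_integral M \<Psi> n E) \<bullet> ones = 0"
        using vm_ones_diff[of \<pi>1 "word_integral M \<Psi> n E" \<pi>2] by linarith
      then show ?thesis unfolding SI_def word_integral_eq[OF sp Pm nn int that] .
    qed
    then show ?thesis unfolding hmm_equiv_def by blast
  qed
  have neg: "SI (\<pi>2 - \<pi>1) n E = - SI (\<pi>1 - \<pi>2) n E" for n E
  proof -
    have e: "((\<pi>2 - \<pi>1) v* A) \<bullet> ones = - (((\<pi>1 - \<pi>2) v* A) \<bullet> ones)" for A
      using vm_ones_neg[of "\<pi>1 - \<pi>2" A] by simp
    show ?thesis unfolding SI_def set_lebesgue_integral_def e by simp
  qed
  have orth: "(\<forall>v \<in> span {psi_word \<Psi> w *v ones | w. True}. orthogonal (\<pi>1 - \<pi>2) v)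
      \<longleftrightarrow> (\<forall>ws. ((\<pi>1 - \<pi>2) v* psi_word \<Psi> ws) \<bullet> ones = 0)"
  proof
    assume a: "\<forall>v \<in> span {psi_word \<Psi> w *v ones | w. True}. orthogonal (\<pi>1 - \<pi>2) v"
    show "\<forall>ws. ((\<pi>1 - \<pi>2) v* psi_word \<Psi> ws) \<bullet> ones = 0"
    proof
      fix ws
      have "psi_word \<Psi> ws *v ones \<in> span {psi_word \<Psi> w *v ones | w. True}"
        by (rule span_base) blast
      then show "((\<pi>1 - \<pi>2) v* psi_word \<Psi> ws) \<bullet> ones = 0"
        using a by (simp add: dot_lmul_matrix orthogonal_def)
    qed
  next
    assume a: "\<forall>ws. ((\<pi>1 - \<pi>2) v* psi_word \<Psi> ws) \<bullet> ones = 0"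
    show "\<forall>v \<in> span {psi_word \<Psi> w *v ones | w. True}. orthogonal (\<pi>1 - \<pi>2) v"
    proof
      fix v assume "v \<in> span {psi_word \<Psi> w *v ones | w. True}"
      then show "orthogonal (\<pi>1 - \<pi>2) v"
      proof (rule orthogonal_to_span)
        fix y assume "y \<in> {psi_word \<Psi> w *v ones | w. True}"
        then obtain w where "y = psi_word \<Psi> w *v ones" by blast
        then show "orthogonal (\<pi>1 - \<pi>2) y" using a[rule_format, of w]
          by (simp add: dot_lmul_matrix orthogonal_def)
      qed
    qed
  qed
  show ?thesis
    unfolding eqv orth
  proof
    assume Z: "\<forall>n. \<forall>E\<in>sets (prod_meas M n). SI (\<pi>1 - \<pi>2) n E = 0"
    then have Z': "\<forall>n. \<forall>E\<in>sets (prod_meas M n). SI (\<pi>2 - \<pi>1) n E = 0" using neg by simp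
    show "\<forall>ws. ((\<pi>1 - \<pi>2) v* psi_word \<Psi> ws) \<bullet> ones = 0"
    proof
      fix ws
      have le: "((\<pi>1 - \<pi>2) v* psi_word \<Psi> ws) \<bullet> ones \<le> 0"
        using no_pos_word[OF assms Z[unfolded SI_def]] .
      have "((\<pi>2 - \<pi>1) v* psi_word \<Psi> ws) \<bullet> ones \<le> 0"
        using no_pos_word[OF assms Z'[unfolded SI_def]] .
      moreover have "((\<pi>2 - \<pi>1) v* psi_word \<Psi> ws) \<bullet> ones = - (((\<pi>1 - \<pi>2) v* psi_word \<Psi> ws) \<bullet> ones)"
        using vm_ones_neg[of "\<pi>1 - \<pi>2" "psi_word \<Psi> ws"] by simp
      ultimately have "((\<pi>1 - \<pi>2) v* psi_word \<Psi> ws) \<bullet> ones \<ge> 0" by linarith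
      then show "((\<pi>1 - \<pi>2) v* psi_word \<Psi> ws) \<bullet> ones = 0" using le by simp
    qed
  next
    assume a: "\<forall>ws. ((\<pi>1 - \<pi>2) v* psi_word \<Psi> ws) \<bullet> ones = 0"
    show "\<forall>n. \<forall>E\<in>sets (prod_meas M n). SI (\<pi>1 - \<pi>2) n E = 0"
      unfolding SI_def set_lebesgue_integral_def using a by simp
  qed
qed


end
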